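(* For any local epistemic model $\mathcal{M}=(W,\delta,\{R_a\}_{a\in\mathbf{A}},\rho)$, its properization $\mathcal{M}^{pr}$ is a well-defined proper local epistemic model such that for every $w\in W$, $\mathcal{M},w$ and $\mathcal{M}^{pr},[w]_\delta$ are bisimilar (and hence $\mathcal{L}$-logically equivalent). In particular, if $\mathcal{M}$ is already a proper local epistemic model, then $\mathcal{M}$ is isomorphic to $\mathcal{M}^{pr}$.
   Context: Fix a nonempty finite set $\mathbf{A}$ of agents, a countable set $\mathbf{X}$ of variables disjoint from $\mathbf{A}$, and a countable set $\mathbf{P}$ of predicate letters. Formulas of $\mathcal{L}$: $\phi ::= p_x \mid \top \mid \neg\phi \mid (\phi\wedge\phi) \mid [x:=a]\phi \mid \mathsf{K}_X\alpha$ ($p\in\mathbf{P}$, $x\in\mathbf{X}$, $a\in\mathbf{A}$, $X\subseteq\mathbf{X}$ finite, $\alpha$ a formula without free variables), with $FV(p_x)=\{x\}$, $FV(\top)=\emptyset$, $FV$ of $\neg,\wedge$ as usual, $FV([x:=a]\phi)=FV(\phi)\setminus\{x\}$, $FV(\mathsf{K}_X\alpha)=X$; sentences are formulas without free variables. A first-order Kripke model is $\mathcal{M}=(W,\delta,\{R_a\}_{a\in\mathbf{A}},\rho)$ with $W\neq\emptyset$, $\delta:W\to\wp(\mathbf{A})\setminus\{\emptyset\}$, $R_a\subseteq W\times W$ with $R_a(w)=\emptyset$ if $a\notin\delta(w)$, and $\rho:\mathbf{P}\times W\to\wp(\mathbf{A})$ with $\rho(p,w)\subseteq\delta(w)$.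 Semantics with assignments $\sigma:\mathbf{X}\to\mathbf{A}$ admissible (i.e. $\sigma[FV(\phi)]\subseteq\delta(w)$): $\mathcal{M},w,\sigma\vDash p_x$ iff $\sigma(x)\in\rho(p,w)$; Booleans standard; $\mathcal{M},w,\sigma\vDash[x:=a]\phi$ iff ($a\in\delta(w)$ implies $\mathcal{M},w,\sigma[x\mapsto a]\vDash\phi$); $\mathcal{M},w,\sigma\vDash\mathsf{K}_X\alpha$ iff $\mathcal{M},v,\sigma\vDash\alpha$ for all $v\in\bigcap_{a\in\sigma[X]}R_a(w)$ (empty intersection $=W$). Pointed models are $\mathcal{L}$-logically equivalent if they satisfy the same sentences. A bisimulation between $\mathcal{M},\mathcal{N}$ is $Z\subseteq W^{\mathcal M}\times W^{\mathcal N}$ such that for $(w,v)\in Z$: $\delta^{\mathcal M}(w)=\delta^{\mathcal N}(v)$ and $\rho^{\mathcal M}(p,w)=\rho^{\mathcal N}(p,v)$ for all $p$; for all $A\subseteq\mathbf{A}$ and $w'\in\bigcap_{a\in A}R^{\mathcal M}_a(w)$ there is $v'\in\bigcap_{a\in A}R^{\mathcal N}_a(v)$ with $(w',v')\in Z$; and symmetrically. $\mathcal{M},w$ and $\mathcal{N},v$ are bisimilar if some bisimulation contains $(w,v)$. An isomorphism $\mathcal{M}\cong\mathcal{N}$ is a bijection $f:W^{\mathcal M}\to W^{\mathcal N}$ with $\delta^{\mathcal N}(f(w))=\delta^{\mathcal M}(w)$, $\rho^{\mathcal N}(p,f(w))=\rho^{\mathcal M}(p,w)$, and $wR^{\mathcal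 M}_a v\iff f(w)R^{\mathcal N}_a f(v)$. $\mathcal{M}$ is a local epistemic model if: (Local S5) for each $a$, the restriction of $R_a$ to $\{w\mid a\in\delta(w)\}$ is an equivalence relation; (Individually Increasing Domain) if $wR_av$ and $a\in\delta(w)$ then $a\in\delta(v)$; (Local Predicates) if $wR_av$ and $a\in\rho(p,w)$ then $a\in\rho(p,v)$; (Collectively Decreasing Domain) if $v\in\bigcap_{a\in\delta(w)}R_a(w)$ then $\delta(v)\subseteq\delta(w)$. It is proper if moreover $\bigcap_{a\in\delta(w)}R_a(w)=\{w\}$ for all $w$. For a local epistemic model, let $[w]_\delta=\bigcap_{a\in\delta(w)}R_a(w)$. The properization $\mathcal{M}^{pr}=(W^{pr},\delta^{pr},\{R^{pr}_a\},\rho^{pr})$ has $W^{pr}=\{[w]_\delta\mid w\in W\}$, $\delta^{pr}([w]_\delta)=\delta(w)$, $R^{pr}_a=\{([w]_\delta,[v]_\delta)\mid wR_av\}$, and $\rho^{pr}(p,[w]_\delta)=\rho(p,w)$. *)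

theory Defs
  imports Main "HOL-Library.Countable"
begin

datatype ('p, 'x, 'a) form =
    Pred 'p 'x
  | Top
  | Neg "('p, 'x, 'a) form"
  | Conj "('p, 'x, 'a) form" "('p, 'x, 'a) form"
  | Assign 'x 'a "('p, 'x, 'a) form"
  | Know "'x set" "('p, 'x, 'a) form"

fun fv :: "('p, 'x, 'a) form \<Rightarrow> 'x set" where
  "fv (Pred p x) = {x}"
| "fv Top = {}"
| "fv (Neg \<phi>) = fv \<phi>"
| "fv (Conj \<phi> \<psi>) = fv \<phi> \<union> fv \<psi>"
| "fv (Assign x a \<phi>) = fv \<phi> - {x}"
| "fv (Know X \<alpha>) = X"

fun wf_form :: "('p, 'x, 'a) form \<Rightarrow> bool" where
  "wf_form (Pred p x) = True"
| "wf_form Top = True"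
| "wf_form (Neg \<phi>) = wf_form \<phi>"
| "wf_form (Conj \<phi> \<psi>) = (wf_form \<phi> \<and> wf_form \<psi>)"
| "wf_form (Assign x a \<phi>) = wf_form \<phi>"
| "wf_form (Know X \<alpha>) = (finite X \<and> wf_form \<alpha> \<and> fv \<alpha> = {})"

definition sentence :: "('p, 'x, 'a) form \<Rightarrow> bool" where
  "sentence \<phi> \<longleftrightarrow> wf_form \<phi> \<and> fv \<phi> = {}"

record ('a, 'p, 'w) kmodel =
  W :: "'w set"
  dom :: "'w \<Rightarrow> 'a set"
  rel :: "'a \<Rightarrow> ('w \<times> 'w) set"
  val :: "'p \<Rightarrow> 'w \<Rightarrow> 'a set"

text \<open>Intersection of R_a(w) over a in A, inside W (empty intersection = W).\<close>
definition Rset :: "('a, 'p, 'w, 'z) kmodel_scheme \<Rightarrow> 'a set \<Rightarrow> 'w \<Rightarrow> 'w set" where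
  "Rset M A w = {v \<in> W M. \<forall>a\<in>A. (w, v) \<in> rel M a}"

definition is_model :: "('a, 'p, 'w, 'z) kmodel_scheme \<Rightarrow> bool" where
  "is_model M \<longleftrightarrow>
     W M \<noteq> {} \<and>
     (\<forall>w\<in>W M. dom M w \<noteq> {}) \<and>
     (\<forall>a. rel M a \<subseteq> W M \<times> W M) \<and>
     (\<forall>a. \<forall>w\<in>W M. a \<notin> dom M w \<longrightarrow> rel M a `` {w} = {}) \<and>
     (\<forall>p. \<forall>w\<in>W M. val M p w \<subseteq> dom M w)"

fun sat :: "('a, 'p, 'w, 'z) kmodel_scheme \<Rightarrow> 'w \<Rightarrow> ('x \<Rightarrow> 'a) \<Rightarrow> ('p, 'x, 'a) form \<Rightarrow> bool" where
  "sat M w \<sigma> (Pred p x) = (\<sigma> x \<in> val M p w)"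
| "sat M w \<sigma> Top = True"
| "sat M w \<sigma> (Neg \<phi>) = (\<not> sat M w \<sigma> \<phi>)"
| "sat M w \<sigma> (Conj \<phi> \<psi>) = (sat M w \<sigma> \<phi> \<and> sat M w \<sigma> \<psi>)"
| "sat M w \<sigma> (Assign x a \<phi>) = (a \<in> dom M w \<longrightarrow> sat M w (\<sigma>(x := a)) \<phi>)"
| "sat M w \<sigma> (Know X \<alpha>) = (\<forall>v\<in>Rset M (\<sigma> ` X) w. sat M v \<sigma> \<alpha>)"

text \<open>Truth of a sentence (every assignment is admissible for a sentence).\<close>
definition sat_sentence :: "('a, 'p, 'w, 'z) kmodel_scheme \<Rightarrow> 'w \<Rightarrow> ('p, 'x, 'a) form \<Rightarrow> bool" where
  "sat_sentence M w \<phi> \<longleftrightarrow> (\<forall>\<sigma>. sat M w \<sigma> \<phi>)"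

definition log_equiv ::
  "('a, 'p, 'w, 'z) kmodel_scheme \<Rightarrow> 'w \<Rightarrow> ('a, 'p, 'v, 'y) kmodel_scheme \<Rightarrow> 'v \<Rightarrow> 'x itself \<Rightarrow> bool" where
  "log_equiv M w N v (_ :: 'x itself) \<longleftrightarrow>
     (\<forall>\<phi> :: ('p, 'x, 'a) form. sentence \<phi> \<longrightarrow> (sat_sentence M w \<phi> \<longleftrightarrow> sat_sentence N v \<phi>))"

definition bisimulation ::
  "('a, 'p, 'w, 'z) kmodel_scheme \<Rightarrow> ('a, 'p, 'v, 'y) kmodel_scheme \<Rightarrow> ('w \<times> 'v) set \<Rightarrow> bool" where
  "bisimulation M N Z \<longleftrightarrow> Z \<subseteq> W M \<times> W N \<and>
     (\<forall>(w, v)\<in>Z.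
        dom M w = dom N v \<and> (\<forall>p. val M p w = val N p v) \<and>
        (\<forall>A. \<forall>w'\<in>Rset M A w. \<exists>v'\<in>Rset N A v. (w', v') \<in> Z) \<and>
        (\<forall>A. \<forall>v'\<in>Rset N A v. \<exists>w'\<in>Rset M A w. (w', v') \<in> Z))"

definition bisimilar ::
  "('a, 'p, 'w, 'z) kmodel_scheme \<Rightarrow> 'w \<Rightarrow> ('a, 'p, 'v, 'y) kmodel_scheme \<Rightarrow> 'v \<Rightarrow> bool" where
  "bisimilar M w N v \<longleftrightarrow> (\<exists>Z. bisimulation M N Z \<and> (w, v) \<in> Z)"

definition isomorphic ::
  "('a, 'p, 'w, 'z) kmodel_scheme \<Rightarrow> ('a, 'p, 'v, 'y) kmodel_scheme \<Rightarrow> bool" where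
  "isomorphic M N \<longleftrightarrow> (\<exists>f. bij_betw f (W M) (W N) \<and>
     (\<forall>w\<in>W M. dom N (f w) = dom M w \<and> (\<forall>p. val N p (f w) = val M p w)) \<and>
     (\<forall>a. \<forall>w\<in>W M. \<forall>v\<in>W M. (w, v) \<in> rel M a \<longleftrightarrow> (f w, f v) \<in> rel N a))"

definition local_epistemic :: "('a, 'p, 'w, 'z) kmodel_scheme \<Rightarrow> bool" where
  "local_epistemic M \<longleftrightarrow> is_model M \<and>
     (\<forall>a. equiv {w \<in> W M. a \<in> dom M w}
             (rel M a \<inter> ({w \<in> W M. a \<in> dom M w} \<times> {w \<in> W M. a \<in> dom M w}))) \<and>
     (\<forall>a w v. (w, v) \<in> rel M a \<and> a \<in> dom M w \<longrightarrow> a \<in> dom M v) \<and>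
     (\<forall>a p w v. (w, v) \<in> rel M a \<and> a \<in> val M p w \<longrightarrow> a \<in> val M p v) \<and>
     (\<forall>w\<in>W M. \<forall>v\<in>Rset M (dom M w) w. dom M v \<subseteq> dom M w)"

definition proper_local_epistemic :: "('a, 'p, 'w, 'z) kmodel_scheme \<Rightarrow> bool" where
  "proper_local_epistemic M \<longleftrightarrow> local_epistemic M \<and>
     (\<forall>w\<in>W M. Rset M (dom M w) w = {w})"

definition cls :: "('a, 'p, 'w, 'z) kmodel_scheme \<Rightarrow> 'w \<Rightarrow> 'w set" where
  "cls M w = Rset M (dom M w) w"

text \<open>A representative of a class; well-definedness is part of the theorem.\<close>
definition rep :: "('a, 'p, 'w, 'z) kmodel_scheme \<Rightarrow> 'w set \<Rightarrow> 'w" where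
  "rep M c = (SOME w. w \<in> W M \<and> cls M w = c)"

definition properization :: "('a, 'p, 'w, 'z) kmodel_scheme \<Rightarrow> ('a, 'p, 'w set) kmodel" where
  "properization M =
     \<lparr> W = cls M ` W M,
       dom = (\<lambda>c. dom M (rep M c)),
       rel = (\<lambda>a. {(cls M w, cls M v) | w v. w \<in> W M \<and> (w, v) \<in> rel M a}),
       val = (\<lambda>p c. val M p (rep M c)) \<rparr>"

end

theory Submission
  imports Defs
begin

lemma le_facts:
  assumes "local_epistemic M"
  shows le_relW: "(w, v) \<in> rel M a \<Longrightarrow> w \<in> W M \<and> v \<in> W M"
    and le_reldom: "(w, v) \<in> rel M a \<Longrightarrow> a \<in> dom M w \<and> a \<in> dom M v"
    and le_refl: "w \<in> W M \<Longrightarrow> a \<in> dom M w \<Longrightarrow> (w, w) \<in> rel M a"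
    and le_sym: "(w, v) \<in> rel M a \<Longrightarrow> (v, w) \<in> rel M a"
    and le_trans: "(w, v) \<in> rel M a \<Longrightarrow> (v, u) \<in> rel M a \<Longrightarrow> (w, u) \<in> rel M a"
    and le_val: "(w, v) \<in> rel M a \<Longrightarrow> a \<in> val M p w \<Longrightarrow> a \<in> val M p v"
    and le_valdom: "w \<in> W M \<Longrightarrow> val M p w \<subseteq> dom M w"
    and le_domne: "w \<in> W M \<Longrightarrow> dom M w \<noteq> {}"
    and le_Wne: "W M \<noteq> {}"
    and le_decr: "w \<in> W M \<Longrightarrow> v \<in> Rset M (dom M w) w \<Longrightarrow> dom M v \<subseteq> dom M w"
proof -
  have m: "is_model M" and eq: "\<And>a. equiv {w \<in> W M. a \<in> dom M w}
             (rel M a \<inter> ({w \<in> W M. a \<in> dom M w} \<times> {w \<in> W M. a \<in> dom M w}))"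
    and inc: "\<And>a w v. (w, v) \<in> rel M a \<Longrightarrow> a \<in> dom M w \<Longrightarrow> a \<in> dom M v"
    and lp: "\<And>a p w v. (w, v) \<in> rel M a \<Longrightarrow> a \<in> val M p w \<Longrightarrow> a \<in> val M p v"
    and dc: "\<forall>w\<in>W M. \<forall>v\<in>Rset M (dom M w) w. dom M v \<subseteq> dom M w"
    using assms unfolding local_epistemic_def by blast+
  show RW: "(w, v) \<in> rel M a \<Longrightarrow> w \<in> W M \<and> v \<in> W M" for w v a
    using m unfolding is_model_def by blast
  show RD: "(w, v) \<in> rel M a \<Longrightarrow> a \<in> dom M w \<and> a \<in> dom M v" for w v a
  proof -
    assume h: "(w, v) \<in> rel M a"
    have "a \<in> dom M w"
    proof (rule ccontr)
      assume "a \<notin> dom M w"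
      with m RW[OF h] have "rel M a `` {w} = {}" unfolding is_model_def by blast
      with h show False by blast
    qed
    with inc h show ?thesis by blast
  qed
  show "w \<in> W M \<Longrightarrow> a \<in> dom M w \<Longrightarrow> (w, w) \<in> rel M a" for w a
    using eq[of a] unfolding equiv_def refl_on_def by blast
  show "(w, v) \<in> rel M a \<Longrightarrow> (v, w) \<in> rel M a" for w v a
    using eq[of a] RW[of w v a] RD[of w v a] unfolding equiv_def sym_def by blast
  show "(w, v) \<in> rel M a \<Longrightarrow> (v, u) \<in> rel M a \<Longrightarrow> (w, u) \<in> rel M a" for w v u a
    using eq[of a] RW[of w v a] RD[of w v a] RW[of v u a] RD[of v u a]
    unfolding equiv_def trans_def by blast
  show "(w, v) \<in> rel M a \<Longrightarrow> a \<in> val M p w \<Longrightarrow> a \<in> val M p v" using lp by blast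
  show "w \<in> W M \<Longrightarrow> val M p w \<subseteq> dom M w" using m unfolding is_model_def by blast
  show "w \<in> W M \<Longrightarrow> dom M w \<noteq> {}" using m unfolding is_model_def by blast
  show "W M \<noteq> {}" using m unfolding is_model_def by blast
  show "w \<in> W M \<Longrightarrow> v \<in> Rset M (dom M w) w \<Longrightarrow> dom M v \<subseteq> dom M w" using dc by blast
qed

lemma cls_self:
  assumes "local_epistemic M" "w \<in> W M"
  shows "w \<in> cls M w"
  using le_refl[OF assms(1)] assms(2) unfolding cls_def Rset_def by blast

lemma cls_mem_same:
  assumes le: "local_epistemic M" and w: "w \<in> W M" and v: "v \<in> cls M w"
  shows "dom M v = dom M w" "val M p v = val M p w" "cls M v = cls M w"
proof -
  have vW: "v \<in> W M" and R: "\<And>a. a \<in> dom M w \<Longrightarrow> (w, v) \<in> rel M a"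
    using v unfolding cls_def Rset_def by auto
  have d1: "dom M v \<subseteq> dom M w" using le_decr[OF le w] v unfolding cls_def by blast
  have d2: "dom M w \<subseteq> dom M v" using R le_reldom[OF le] by blast
  show dd: "dom M v = dom M w" using d1 d2 by blast
  show "val M p v = val M p w"
  proof
    show "val M p v \<subseteq> val M p w"
      using le_valdom[OF le vW, of p] dd R le_sym[OF le] le_val[OF le] by blast
    show "val M p w \<subseteq> val M p v"
      using le_valdom[OF le w, of p] R le_val[OF le] by blast
  qed
  show "cls M v = cls M w"
    unfolding cls_def Rset_def dd using R le_sym[OF le] le_trans[OF le] by blast
qed

lemma cls_eq_same:
  assumes le: "local_epistemic M" and w: "w \<in> W M" and w': "w' \<in> W M"
    and e: "cls M w = cls M w'"
  shows "dom M w = dom M w'" "val M p w = val M p w'"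
proof -
  have "w' \<in> cls M w" using e cls_self[OF le w'] by simp
  then show "dom M w = dom M w'" "val M p w = val M p w'"
    using cls_mem_same[OF le w] by auto
qed

lemma rep_facts:
  assumes le: "local_epistemic M" and w: "w \<in> W M"
  shows "rep M (cls M w) \<in> W M \<and> cls M (rep M (cls M w)) = cls M w"
  unfolding rep_def by (rule someI[of _ w]) (use w in simp)

lemma rep_dom:
  assumes le: "local_epistemic M" and w: "w \<in> W M"
  shows "dom M (rep M (cls M w)) = dom M w" "val M p (rep M (cls M w)) = val M p w"
  using cls_eq_same[OF le _ w] rep_facts[OF le w] by auto

lemma key:
  assumes le: "local_epistemic M" and w: "w \<in> W M" and v: "v \<in> W M"
  shows "(cls M w, cls M v) \<in> rel (properization M) a \<longleftrightarrow> (w, v) \<in> rel M a"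
proof
  assume "(cls M w, cls M v) \<in> rel (properization M) a"
  then obtain w1 v1 where h: "cls M w = cls M w1" "cls M v = cls M v1" "w1 \<in> W M"
    "(w1, v1) \<in> rel M a"
    unfolding properization_def by auto
  have v1: "v1 \<in> W M" using le_relW[OF le h(4)] by blast
  have a1: "a \<in> dom M w1" "a \<in> dom M v1" using le_reldom[OF le h(4)] by auto
  have "w \<in> cls M w1" using h(1) cls_self[OF le w] by simp
  then have "(w1, w) \<in> rel M a" using a1 unfolding cls_def Rset_def by blast
  moreover have "v \<in> cls M v1" using h(2) cls_self[OF le v] by simp
  then have "(v1, v) \<in> rel M a" using a1 unfolding cls_def Rset_def by blast
  ultimately show "(w, v) \<in> rel M a"
    using h(4) le_sym[OF le] le_trans[OF le] by blast
next
  assume "(w, v) \<in> rel M a"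
  then show "(cls M w, cls M v) \<in> rel (properization M) a"
    using w unfolding properization_def by auto
qed

lemma propW: "W (properization M) = cls M ` W M"
  by (simp add: properization_def)

lemma propdom: "dom (properization M) c = dom M (rep M c)"
  by (simp add: properization_def)

lemma propval: "val (properization M) p c = val M p (rep M c)"
  by (simp add: properization_def)

lemma propdom': "local_epistemic M \<Longrightarrow> w \<in> W M \<Longrightarrow> dom (properization M) (cls M w) = dom M w"
  by (simp add: propdom rep_dom)

lemma propval': "local_epistemic M \<Longrightarrow> w \<in> W M \<Longrightarrow> val (properization M) p (cls M w) = val M p w"
  by (simp add: propval rep_dom)

lemma proprel_cases:
  assumes "(c, d) \<in> rel (properization M) a"
  obtains w v where "c = cls M w" "d = cls M v" "w \<in> W M" "(w, v) \<in> rel M a"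
  using assms unfolding properization_def by auto

lemma Rset_prop:
  assumes le: "local_epistemic M" and w: "w \<in> W M"
  shows "Rset (properization M) A (cls M w) = cls M ` Rset M A w"
proof
  show "Rset (properization M) A (cls M w) \<subseteq> cls M ` Rset M A w"
  proof
    fix c assume c: "c \<in> Rset (properization M) A (cls M w)"
    then obtain v where v: "v \<in> W M" "c = cls M v" unfolding Rset_def propW by blast
    have "\<forall>a\<in>A. (w, v) \<in> rel M a" using c v key[OF le w v(1)] unfolding Rset_def by auto
    then show "c \<in> cls M ` Rset M A w" using v unfolding Rset_def by blast
  qed
  show "cls M ` Rset M A w \<subseteq> Rset (properization M) A (cls M w)"
    using key[OF le w] unfolding Rset_def propW by auto
qed

lemma bisim_sat:
  assumes "bisimulation M N Z" "(w, v) \<in> Z"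
  shows "sat M w \<sigma> \<phi> \<longleftrightarrow> sat N v \<sigma> \<phi>"
  using assms(2)
proof (induction \<phi> arbitrary: w v \<sigma>)
  case (Pred p x)
  then show ?case using assms(1) unfolding bisimulation_def by auto
next
  case (Assign x a \<phi>)
  then have "dom M w = dom N v" using assms(1) unfolding bisimulation_def by auto
  then show ?case using Assign.IH[OF Assign.prems, of "\<sigma>(x := a)"] by (simp add: fun_upd_def)
next
  case (Know X \<alpha>)
  have b: "\<forall>w'\<in>Rset M (\<sigma> ` X) w. \<exists>v'\<in>Rset N (\<sigma> ` X) v. (w', v') \<in> Z"
    "\<forall>v'\<in>Rset N (\<sigma> ` X) v. \<exists>w'\<in>Rset M (\<sigma> ` X) w. (w', v') \<in> Z"
    using assms(1) Know.prems unfolding bisimulation_def by fast+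
  have IH: "\<And>w' v'. (w', v') \<in> Z \<Longrightarrow> sat M w' \<sigma> \<alpha> = sat N v' \<sigma> \<alpha>"
    using Know.IH by blast
  show ?case
  proof
    assume h: "sat M w \<sigma> (Know X \<alpha>)"
    show "sat N v \<sigma> (Know X \<alpha>)"
    proof (simp only: sat.simps, intro ballI)
      fix v' assume "v' \<in> Rset N (\<sigma> ` X) v"
      then obtain w' where "w' \<in> Rset M (\<sigma> ` X) w" "(w', v') \<in> Z" using b(2) by blast
      then show "sat N v' \<sigma> \<alpha>" using h IH by auto
    qed
  next
    assume h: "sat N v \<sigma> (Know X \<alpha>)"
    show "sat M w \<sigma> (Know X \<alpha>)"
    proof (simp only: sat.simps, intro ballI)
      fix w' assume "w' \<in> Rset M (\<sigma> ` X) w"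
      then obtain v' where "v' \<in> Rset N (\<sigma> ` X) v" "(w', v') \<in> Z" using b(1) by blast
      then show "sat M w' \<sigma> \<alpha>" using h IH by auto
    qed
  qed
qed auto

theorem proposition1:
  fixes M :: "('a :: finite, 'p :: countable, 'w) kmodel"
    and X :: "'x :: countable itself"
  assumes "local_epistemic M"
  shows "(\<forall>w\<in>W M. \<forall>w'\<in>W M. cls M w = cls M w' \<longrightarrow>
            dom M w = dom M w' \<and> (\<forall>p. val M p w = val M p w'))
       \<and> proper_local_epistemic (properization M)
       \<and> (\<forall>w\<in>W M. bisimilar M w (properization M) (cls M w)
                    \<and> log_equiv M w (properization M) (cls M w) X)
       \<and> (proper_local_epistemic M \<longrightarrow> isomorphic M (properization M))"
proof (intro conjI)
  note le = assms
  let ?P = "properization M"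
  show "\<forall>w\<in>W M. \<forall>w'\<in>W M. cls M w = cls M w' \<longrightarrow>
            dom M w = dom M w' \<and> (\<forall>p. val M p w = val M p w')"
    using cls_eq_same[OF le] by blast
  have ism: "is_model ?P"
    unfolding is_model_def
  proof (intro conjI allI ballI impI)
    have "W M \<noteq> {}" by (rule le_Wne[OF le])
    then show "W ?P \<noteq> {}" unfolding propW[of M] by blast
    show "dom ?P c \<noteq> {}" if "c \<in> W ?P" for c
      using that propW[of M] propdom'[OF le] le_domne[OF le] by fastforce
    show "rel ?P a \<subseteq> W ?P \<times> W ?P" for a
      using le_relW[OF le] propW[of M] by (auto elim!: proprel_cases)
    show "rel ?P a `` {c} = {}" if "c \<in> W ?P" "a \<notin> dom ?P c" for a c
      using that propW[of M] propdom'[OF le] le_reldom[OF le] le_relW[OF le]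
      by (fastforce elim!: proprel_cases)
    show "val ?P p c \<subseteq> dom ?P c" if "c \<in> W ?P" for p c
      using that propW[of M] propdom'[OF le] propval'[OF le] le_valdom[OF le] by fastforce
  qed
  have le2: "local_epistemic ?P"
    unfolding local_epistemic_def
  proof (intro conjI allI impI ballI)
    show "is_model ?P" by (rule ism)
    fix a
    show "equiv {w \<in> W ?P. a \<in> dom ?P w}
             (rel ?P a \<inter> ({w \<in> W ?P. a \<in> dom ?P w} \<times> {w \<in> W ?P. a \<in> dom ?P w}))"
      unfolding equiv_def refl_on_def sym_def trans_def
    proof (intro conjI allI impI ballI)
      show "rel ?P a \<inter> ({w \<in> W ?P. a \<in> dom ?P w} \<times> {w \<in> W ?P. a \<in> dom ?P w})
        \<subseteq> {w \<in> W ?P. a \<in> dom ?P w} \<times> {w \<in> W ?P. a \<in> dom ?P w}" by blast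
      fix c assume "c \<in> {w \<in> W ?P. a \<in> dom ?P w}"
      then obtain w where "w \<in> W M" "c = cls M w" "a \<in> dom M w"
        using propW[of M] propdom'[OF le] by auto
      then show "(c, c) \<in> rel ?P a \<inter> ({w \<in> W ?P. a \<in> dom ?P w} \<times> {w \<in> W ?P. a \<in> dom ?P w})"
        using key[OF le] le_refl[OF le] propW[of M] propdom'[OF le] by auto
    next
      fix c d assume h: "(c, d) \<in> rel ?P a \<inter> ({w \<in> W ?P. a \<in> dom ?P w} \<times> {w \<in> W ?P. a \<in> dom ?P w})"
      then obtain w v where "w \<in> W M" "v \<in> W M" "c = cls M w" "d = cls M v"
        using propW[of M] by auto
      then show "(d, c) \<in> rel ?P a \<inter> ({w \<in> W ?P. a \<in> dom ?P w} \<times> {w \<in> W ?P. a \<in> dom ?P w})"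
        using h key[OF le] le_sym[OF le] by auto
    next
      fix c d e assume h: "(c, d) \<in> rel ?P a \<inter> ({w \<in> W ?P. a \<in> dom ?P w} \<times> {w \<in> W ?P. a \<in> dom ?P w})"
        "(d, e) \<in> rel ?P a \<inter> ({w \<in> W ?P. a \<in> dom ?P w} \<times> {w \<in> W ?P. a \<in> dom ?P w})"
      then obtain w v u where "w \<in> W M" "v \<in> W M" "u \<in> W M" "c = cls M w" "d = cls M v" "e = cls M u"
        using propW[of M] by auto
      then show "(c, e) \<in> rel ?P a \<inter> ({w \<in> W ?P. a \<in> dom ?P w} \<times> {w \<in> W ?P. a \<in> dom ?P w})"
        using h key[OF le] le_trans[OF le] by auto
    qed
  next
    fix a c d assume h: "(c, d) \<in> rel ?P a \<and> a \<in> dom ?P c"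
    then have "(c, d) \<in> rel ?P a" by (rule conjunct1)
    then obtain w v where wv: "c = cls M w" "d = cls M v" "w \<in> W M" "(w, v) \<in> rel M a"
      by (rule proprel_cases)
    have vW: "v \<in> W M" using le_relW[OF le wv(4)] by (rule conjunct2)
    have "a \<in> dom M v" using le_reldom[OF le wv(4)] by (rule conjunct2)
    then show "a \<in> dom ?P d" using wv(2) propdom'[OF le vW] by simp
  next
    fix a p c d assume h: "(c, d) \<in> rel ?P a \<and> a \<in> val ?P p c"
    then have "(c, d) \<in> rel ?P a" by (rule conjunct1)
    then obtain w v where wv: "c = cls M w" "d = cls M v" "w \<in> W M" "(w, v) \<in> rel M a"
      by (rule proprel_cases)
    have vW: "v \<in> W M" using le_relW[OF le wv(4)] by (rule conjunct2)
    have "a \<in> val M p w" using h wv(1) propval'[OF le wv(3)] by simp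
    then have "a \<in> val M p v" by (rule le_val[OF le wv(4)])
    then show "a \<in> val ?P p d" using wv(2) propval'[OF le vW] by simp
  next
    fix c d assume c: "c \<in> W ?P" and d: "d \<in> Rset ?P (dom ?P c) c"
    from c obtain w where w: "w \<in> W M" "c = cls M w" unfolding propW[of M] by blast
    have e: "Rset ?P (dom ?P c) c = cls M ` Rset M (dom M w) w"
      using Rset_prop[OF le w(1)] propdom'[OF le w(1)] w(2) by simp
    from d obtain v where v: "v \<in> Rset M (dom M w) w" "d = cls M v"
      unfolding e by blast
    have vc: "v \<in> cls M w" using v unfolding cls_def by simp
    have "cls M v = cls M w" by (rule cls_mem_same(3)[OF le w(1) vc])
    then show "dom ?P d \<subseteq> dom ?P c" using w v by simp
  qed
  have propr: "Rset ?P (dom ?P c) c = {c}" if cW: "c \<in> W ?P" for c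
  proof -
    obtain w where w: "w \<in> W M" "c = cls M w" using cW propW[of M] by auto
    have "Rset ?P (dom ?P c) c = cls M ` cls M w"
      using w Rset_prop[OF le] propdom'[OF le] unfolding cls_def by simp
    also have "\<dots> = {cls M w}"
      using cls_mem_same(3)[OF le w(1)] cls_self[OF le w(1)] by blast
    finally show ?thesis using w by simp
  qed
  show "proper_local_epistemic ?P"
    unfolding proper_local_epistemic_def using le2 propr by blast
  have bis: "bisimulation M ?P {(w, cls M w) | w. w \<in> W M}"
    unfolding bisimulation_def
  proof (intro conjI ballI allI)
    show "{(w, cls M w) | w. w \<in> W M} \<subseteq> W M \<times> W ?P" using propW[of M] by auto
  next
    fix x assume "x \<in> {(w, cls M w) | w. w \<in> W M}"
    then obtain w where x: "x = (w, cls M w)" "w \<in> W M" by blast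
    have RW: "Rset M A w \<subseteq> W M" for A unfolding Rset_def by blast
    show "case x of (w, v) \<Rightarrow>
        dom M w = dom ?P v \<and> (\<forall>p. val M p w = val ?P p v) \<and>
        (\<forall>A. \<forall>w'\<in>Rset M A w. \<exists>v'\<in>Rset ?P A v. (w', v') \<in> {(w, cls M w) | w. w \<in> W M}) \<and>
        (\<forall>A. \<forall>v'\<in>Rset ?P A v. \<exists>w'\<in>Rset M A w. (w', v') \<in> {(w, cls M w) | w. w \<in> W M})"
      using x propdom'[OF le] propval'[OF le] Rset_prop[OF le x(2)] RW by fastforce
  qed
  show "\<forall>w\<in>W M. bisimilar M w ?P (cls M w) \<and> log_equiv M w ?P (cls M w) X"
  proof
    fix w assume w: "w \<in> W M"
    have z: "(w, cls M w) \<in> {(w, cls M w) | w. w \<in> W M}" using w by blast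
    show "bisimilar M w ?P (cls M w) \<and> log_equiv M w ?P (cls M w) X"
      unfolding bisimilar_def log_equiv_def sat_sentence_def
      using bis z bisim_sat[OF bis z] by blast
  qed
  show "proper_local_epistemic M \<longrightarrow> isomorphic M ?P"
  proof
    assume pr: "proper_local_epistemic M"
    then have c1: "cls M w = {w}" if "w \<in> W M" for w
      using that unfolding proper_local_epistemic_def cls_def by blast
    have "inj_on (cls M) (W M)" using c1 by (auto intro: inj_onI)
    then have "bij_betw (cls M) (W M) (W ?P)" unfolding bij_betw_def propW[of M] by simp
    then show "isomorphic M ?P"
      unfolding isomorphic_def
      using propdom'[OF le] propval'[OF le] key[OF le] by blast
  qed
qed

end
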